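(* Let $T$ be a trigraph in $\mathcal F$ that admits no balanced skew-partition and contains no antihole of length six. If $T$ is unfavorable, then either $T$ is complete or $|V(T)|\le 5$.
   Context: A trigraph $T$ consists of a finite set $V(T)$ and a map $\theta:\binom{V(T)}{2}\to\{-1,0,1\}$. Two distinct vertices $u,v$ are strongly adjacent if $\theta(uv)=1$, strongly antiadjacent if $\theta(uv)=-1$, and semiadjacent (a switchable pair) if $\theta(uv)=0$; they are adjacent if $\theta(uv)\in\{0,1\}$ and antiadjacent if $\theta(uv)\in\{0,-1\}$. $N(v)$ is the set of vertices adjacent to $v$. An edge (antiedge) is an adjacent (antiadjacent) pair; a strong edge (strong antiedge) is a strongly adjacent (strongly antiadjacent) pair. A vertex/set is strongly complete (strongly anticomplete, complete, anticomplete) to a disjoint set if every pair between them is strongly adjacent (strongly antiadjacent, adjacent, antiadjacent). The complement $\overline T$ has vertex set $V(T)$ and adjacency function $-\theta$. For $X\subseteq V(T)$, $T|X$ is the trigraph on $X$ with $\theta$ restricted, and $T\setminus X=T|(V(T)\setminus X)$; $T$ contains $H$ if $H$ is isomorphic to some $T|X$. A clique (strong clique) is a set of pairwise adjacent (strongly adjacent) vertices; a stable set (strongly stable set) is a set of pairwise antiadjacent (strongly antiadjacent) vertices; $T$ is complete if $V(T)$ is a clique. $T$ is a graph if it has no switchable pair. A realization of $T$ is a graph on $V(T)$ in which every strong edge is an edge and every strong antiedge is a non-edge; the full realization is the realization in which all switchable pairs are edges. A set $X$ is connected if the full realization of $T|X$ is connected, and anticonnected if the graph on $X$ whose edges are the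 antiadjacent pairs of $T|X$ is connected; components (anticomponents) are maximal connected (anticonnected) subsets. A path is a sequence of distinct vertices $p_1,\dots,p_k$ such that $p_i,p_j$ are adjacent when $|i-j|=1$ and antiadjacent when $|i-j|>1$; its length is $k-1$, and it is even or odd according to its length. An antipath is an induced subtrigraph whose complement is a path of $\overline T$. A hole of length $k\ge5$ consists of vertices $h_1,\dots,h_k$ with $h_i,h_j$ adjacent if $|i-j|\in\{1,k-1\}$ and antiadjacent otherwise; an antihole is an induced subtrigraph whose complement is a hole of $\overline T$ (length = number of vertices). $T$ is Berge if it contains no hole of odd length and no antihole of odd length. An even pair of $T$ is a strongly antiadjacent pair $\{u,v\}$ such that every path from $u$ to $v$ in $T$ has even length. $\Sigma(T)$ is the graph on $V(T)$ whose edges are the switchable pairs of $T$; a switchable component is a connected component of $\Sigma(T)$ with at least two vertices. $\mathcal F$ is the class of Berge trigraphs $T$ such that: (1) $T$ has at most one switchable component, and it has at most two edges; (2) if the switchable component has exactly one edge $xy$, then $N(x)\cap N(y)=\emptyset$ (it is called small); (3) if it has two edges, with $v$ the vertex of degree two in $\Sigma(T)$ and $x,y$ its neighbours, then $v$ is strongly anticomplete to $V(T)\setminus\{v,x,y\}$, $x$ is strongly antiadjacent to $y$, and $N(x)\cap N(y)=\{v\}$ (it is called light). For $T\in\mathcal F$, $D$ denotes the vertex set of its switchable component ($D=\emptyset$ if $T$ has no switchable pair). A pair $\{u,v\}$ is disjoint from the switchable component if $\{u,v\}\cap D=\emptyset$. A trigraph $T\in\mathcal F$ is favorable if (1) $|V(T)|\ge5$;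 (2) $T$ has a strongly antiadjacent pair $\{u,v\}$ disjoint from $D$; and (3) if $D=\{x,y\}$ is small, then at least one of $V(T)\setminus(D\cup N(x))$, $V(T)\setminus(D\cup N(y))$ is not a clique. It is unfavorable otherwise. A skew-partition of $T$ is a partition $(A,B)$ of $V(T)$ with $A$ not connected and $B$ not anticonnected; it is balanced if there is no odd path of length greater than one with both ends in $B$ and interior in $A$, and no odd antipath of length greater than one with both ends in $A$ and interior in $B$. *)

theory Defs
  imports Main
begin

definition trigraph :: "'a set \<Rightarrow> ('a \<Rightarrow> 'a \<Rightarrow> int) \<Rightarrow> bool" where
  "trigraph V \<theta> \<longleftrightarrow> finite V \<and>
     (\<forall>u\<in>V. \<forall>v\<in>V. u \<noteq> v \<longrightarrow> \<theta> u v = \<theta> v u \<and> \<theta> u v \<in> {-1, 0, 1})"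

definition adj :: "('a \<Rightarrow> 'a \<Rightarrow> int) \<Rightarrow> 'a \<Rightarrow> 'a \<Rightarrow> bool" where
  "adj \<theta> u v \<longleftrightarrow> \<theta> u v \<in> {0, 1}"

definition antiadj :: "('a \<Rightarrow> 'a \<Rightarrow> int) \<Rightarrow> 'a \<Rightarrow> 'a \<Rightarrow> bool" where
  "antiadj \<theta> u v \<longleftrightarrow> \<theta> u v \<in> {0, -1}"

definition nbhd :: "'a set \<Rightarrow> ('a \<Rightarrow> 'a \<Rightarrow> int) \<Rightarrow> 'a \<Rightarrow> 'a set" where
  "nbhd V \<theta> v = {u \<in> V. u \<noteq> v \<and> adj \<theta> u v}"

definition is_clique :: "('a \<Rightarrow> 'a \<Rightarrow> int) \<Rightarrow> 'a set \<Rightarrow> bool" where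
  "is_clique \<theta> X \<longleftrightarrow> (\<forall>u\<in>X. \<forall>v\<in>X. u \<noteq> v \<longrightarrow> adj \<theta> u v)"

definition complete_trigraph :: "'a set \<Rightarrow> ('a \<Rightarrow> 'a \<Rightarrow> int) \<Rightarrow> bool" where
  "complete_trigraph V \<theta> \<longleftrightarrow> is_clique \<theta> V"

text \<open>Paths and antipaths, given as lists of vertices p_1,...,p_k (length = k-1).\<close>

definition is_path :: "'a set \<Rightarrow> ('a \<Rightarrow> 'a \<Rightarrow> int) \<Rightarrow> 'a list \<Rightarrow> bool" where
  "is_path V \<theta> ps \<longleftrightarrow> ps \<noteq> [] \<and> distinct ps \<and> set ps \<subseteq> V \<and>
     (\<forall>i<length ps. \<forall>j<length ps.
        (i + 1 = j \<longrightarrow> adj \<theta> (ps ! i) (ps ! j)) \<and>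
        (i + 1 < j \<longrightarrow> antiadj \<theta> (ps ! i) (ps ! j)))"

definition is_antipath :: "'a set \<Rightarrow> ('a \<Rightarrow> 'a \<Rightarrow> int) \<Rightarrow> 'a list \<Rightarrow> bool" where
  "is_antipath V \<theta> ps \<longleftrightarrow> ps \<noteq> [] \<and> distinct ps \<and> set ps \<subseteq> V \<and>
     (\<forall>i<length ps. \<forall>j<length ps.
        (i + 1 = j \<longrightarrow> antiadj \<theta> (ps ! i) (ps ! j)) \<and>
        (i + 1 < j \<longrightarrow> adj \<theta> (ps ! i) (ps ! j)))"

definition cyc_consec :: "nat \<Rightarrow> nat \<Rightarrow> nat \<Rightarrow> bool" where
  "cyc_consec k i j \<longleftrightarrow> (i + 1) mod k = j \<or> (j + 1) mod k = i"

definition is_hole :: "'a set \<Rightarrow> ('a \<Rightarrow> 'a \<Rightarrow> int) \<Rightarrow> 'a list \<Rightarrow> bool" where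
  "is_hole V \<theta> hs \<longleftrightarrow> length hs \<ge> 5 \<and> distinct hs \<and> set hs \<subseteq> V \<and>
     (\<forall>i<length hs. \<forall>j<length hs. i \<noteq> j \<longrightarrow>
        (cyc_consec (length hs) i j \<longrightarrow> adj \<theta> (hs ! i) (hs ! j)) \<and>
        (\<not> cyc_consec (length hs) i j \<longrightarrow> antiadj \<theta> (hs ! i) (hs ! j)))"

definition is_antihole :: "'a set \<Rightarrow> ('a \<Rightarrow> 'a \<Rightarrow> int) \<Rightarrow> 'a list \<Rightarrow> bool" where
  "is_antihole V \<theta> hs \<longleftrightarrow> length hs \<ge> 5 \<and> distinct hs \<and> set hs \<subseteq> V \<and>
     (\<forall>i<length hs. \<forall>j<length hs. i \<noteq> j \<longrightarrow>
        (cyc_consec (length hs) i j \<longrightarrow> antiadj \<theta> (hs ! i) (hs ! j)) \<and>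
        (\<not> cyc_consec (length hs) i j \<longrightarrow> adj \<theta> (hs ! i) (hs ! j)))"

definition berge :: "'a set \<Rightarrow> ('a \<Rightarrow> 'a \<Rightarrow> int) \<Rightarrow> bool" where
  "berge V \<theta> \<longleftrightarrow> \<not> (\<exists>hs. is_hole V \<theta> hs \<and> odd (length hs)) \<and>
                  \<not> (\<exists>hs. is_antihole V \<theta> hs \<and> odd (length hs))"

text \<open>Connectivity (of the full realization of T|X) and anticonnectivity.
  The empty set counts as connected, so "not connected" means at least two components.\<close>

definition connected_set :: "('a \<Rightarrow> 'a \<Rightarrow> int) \<Rightarrow> 'a set \<Rightarrow> bool" where
  "connected_set \<theta> X \<longleftrightarrow> (\<forall>u\<in>X. \<forall>v\<in>X.
     (\<lambda>a b. a \<in> X \<and> b \<in> X \<and> a \<noteq> b \<and> adj \<theta> a b)\<^sup>*\<^sup>* u v)"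

definition anticonnected_set :: "('a \<Rightarrow> 'a \<Rightarrow> int) \<Rightarrow> 'a set \<Rightarrow> bool" where
  "anticonnected_set \<theta> X \<longleftrightarrow> (\<forall>u\<in>X. \<forall>v\<in>X.
     (\<lambda>a b. a \<in> X \<and> b \<in> X \<and> a \<noteq> b \<and> antiadj \<theta> a b)\<^sup>*\<^sup>* u v)"

definition skew_partition :: "'a set \<Rightarrow> ('a \<Rightarrow> 'a \<Rightarrow> int) \<Rightarrow> 'a set \<Rightarrow> 'a set \<Rightarrow> bool" where
  "skew_partition V \<theta> A B \<longleftrightarrow> A \<union> B = V \<and> A \<inter> B = {} \<and>
     \<not> connected_set \<theta> A \<and> \<not> anticonnected_set \<theta> B"

definition balanced_skew_partition :: "'a set \<Rightarrow> ('a \<Rightarrow> 'a \<Rightarrow> int) \<Rightarrow> 'a set \<Rightarrow> 'a set \<Rightarrow> bool" where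
  "balanced_skew_partition V \<theta> A B \<longleftrightarrow> skew_partition V \<theta> A B \<and>
     \<not> (\<exists>ps. is_path V \<theta> ps \<and> odd (length ps - 1) \<and> length ps - 1 > 1 \<and>
            hd ps \<in> B \<and> last ps \<in> B \<and> set (butlast (tl ps)) \<subseteq> A) \<and>
     \<not> (\<exists>ps. is_antipath V \<theta> ps \<and> odd (length ps - 1) \<and> length ps - 1 > 1 \<and>
            hd ps \<in> A \<and> last ps \<in> A \<and> set (butlast (tl ps)) \<subseteq> B)"

definition sw_edge :: "'a set \<Rightarrow> ('a \<Rightarrow> 'a \<Rightarrow> int) \<Rightarrow> 'a \<Rightarrow> 'a \<Rightarrow> bool" where
  "sw_edge V \<theta> u v \<longleftrightarrow> u \<in> V \<and> v \<in> V \<and> u \<noteq> v \<and> \<theta> u v = 0"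

definition sigma_comp :: "'a set \<Rightarrow> ('a \<Rightarrow> 'a \<Rightarrow> int) \<Rightarrow> 'a \<Rightarrow> 'a set" where
  "sigma_comp V \<theta> x = {y \<in> V. (sw_edge V \<theta>)\<^sup>*\<^sup>* x y}"

definition switchable_component :: "'a set \<Rightarrow> ('a \<Rightarrow> 'a \<Rightarrow> int) \<Rightarrow> 'a set \<Rightarrow> bool" where
  "switchable_component V \<theta> C \<longleftrightarrow> (\<exists>x\<in>V. C = sigma_comp V \<theta> x) \<and> card C \<ge> 2"

definition sw_edges_in :: "'a set \<Rightarrow> ('a \<Rightarrow> 'a \<Rightarrow> int) \<Rightarrow> 'a set \<Rightarrow> 'a set set" where
  "sw_edges_in V \<theta> C = {{u, v} | u v. u \<in> C \<and> v \<in> C \<and> sw_edge V \<theta> u v}"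

text \<open>D: vertex set of the switchable component (empty if there is none).\<close>

definition Dset :: "'a set \<Rightarrow> ('a \<Rightarrow> 'a \<Rightarrow> int) \<Rightarrow> 'a set" where
  "Dset V \<theta> = \<Union> {C. switchable_component V \<theta> C}"

definition class_F :: "'a set \<Rightarrow> ('a \<Rightarrow> 'a \<Rightarrow> int) \<Rightarrow> bool" where
  "class_F V \<theta> \<longleftrightarrow> trigraph V \<theta> \<and> berge V \<theta> \<and>
     (\<forall>C C'. switchable_component V \<theta> C \<and> switchable_component V \<theta> C' \<longrightarrow> C = C') \<and>
     (\<forall>C. switchable_component V \<theta> C \<longrightarrow>
        card (sw_edges_in V \<theta> C) \<le> 2 \<and>
        (\<forall>x y. sw_edges_in V \<theta> C = {{x, y}} \<longrightarrow>
            nbhd V \<theta> x \<inter> nbhd V \<theta> y = {}) \<and>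
        (\<forall>v x y. x \<noteq> y \<and> sw_edges_in V \<theta> C = {{v, x}, {v, y}} \<longrightarrow>
            (\<forall>w\<in>V - {v, x, y}. \<theta> v w = -1) \<and> \<theta> x y = -1 \<and>
            nbhd V \<theta> x \<inter> nbhd V \<theta> y = {v}))"

definition favorable :: "'a set \<Rightarrow> ('a \<Rightarrow> 'a \<Rightarrow> int) \<Rightarrow> bool" where
  "favorable V \<theta> \<longleftrightarrow> card V \<ge> 5 \<and>
     (\<exists>u\<in>V - Dset V \<theta>. \<exists>v\<in>V - Dset V \<theta>. u \<noteq> v \<and> \<theta> u v = -1) \<and>
     (\<forall>x y. x \<noteq> y \<and> Dset V \<theta> = {x, y} \<longrightarrow>
        \<not> is_clique \<theta> (V - (Dset V \<theta> \<union> nbhd V \<theta> x)) \<or>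
        \<not> is_clique \<theta> (V - (Dset V \<theta> \<union> nbhd V \<theta> y)))"

end

theory Submission
  imports Defs
begin


lemma tri_sym: "trigraph V \<theta> \<Longrightarrow> u \<in> V \<Longrightarrow> v \<in> V \<Longrightarrow> u \<noteq> v \<Longrightarrow> \<theta> u v = \<theta> v u"
  by (simp add: trigraph_def)

lemma tri_val: "trigraph V \<theta> \<Longrightarrow> u \<in> V \<Longrightarrow> v \<in> V \<Longrightarrow> u \<noteq> v \<Longrightarrow> \<theta> u v = -1 \<or> \<theta> u v = 0 \<or> \<theta> u v = 1"
  unfolding trigraph_def by auto

lemma closed_reach:
  assumes "R\<^sup>*\<^sup>* a b" "a \<in> S" "\<And>u w. u \<in> S \<Longrightarrow> R u w \<Longrightarrow> w \<in> S"
  shows "b \<in> S"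
  using assms by (induction rule: rtranclp_induct) auto

lemma not_connected_I:
  assumes "u \<in> A" "w \<in> A" "u \<in> S" "w \<notin> S"
    and "\<And>a b. a \<in> A \<Longrightarrow> b \<in> A \<Longrightarrow> a \<in> S \<Longrightarrow> b \<notin> S \<Longrightarrow> \<not> adj \<theta> a b"
  shows "\<not> connected_set \<theta> A"
proof
  assume "connected_set \<theta> A"
  then have "(\<lambda>a b. a \<in> A \<and> b \<in> A \<and> a \<noteq> b \<and> adj \<theta> a b)\<^sup>*\<^sup>* u w"
    using assms unfolding connected_set_def by blast
  then have "w \<in> S" by (rule closed_reach) (use assms in auto)
  with assms show False by simp
qed

lemma not_anticonnected_I:
  assumes "u \<in> A" "w \<in> A" "u \<in> S" "w \<notin> S"
    and "\<And>a b. a \<in> A \<Longrightarrow> b \<in> A \<Longrightarrow> a \<in> S \<Longrightarrow> b \<notin> S \<Longrightarrow> \<not> antiadj \<theta> a b"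
  shows "\<not> anticonnected_set \<theta> A"
proof
  assume "anticonnected_set \<theta> A"
  then have "(\<lambda>a b. a \<in> A \<and> b \<in> A \<and> a \<noteq> b \<and> antiadj \<theta> a b)\<^sup>*\<^sup>* u w"
    using assms unfolding anticonnected_set_def by blast
  then have "w \<in> S" by (rule closed_reach) (use assms in auto)
  with assms show False by simp
qed

lemma dist_nth: "distinct xs \<Longrightarrow> i < length xs \<Longrightarrow> j < length xs \<Longrightarrow> i \<noteq> j \<Longrightarrow> xs!i \<noteq> xs!j"
  by (simp add: nth_eq_iff_index_eq)

lemma len4: "odd (length ps - 1) \<Longrightarrow> length ps - 1 > 1 \<Longrightarrow> length ps \<ge> 4"
  by presburger

lemma interior12:
  assumes "length ps \<ge> 4"
  shows "ps!1 \<in> set (butlast (tl ps)) \<and> ps!2 \<in> set (butlast (tl ps))"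
proof -
  obtain a b c d r where "ps = a#b#c#d#r" using assms
    by (cases ps; cases "tl ps"; cases "tl (tl ps)"; cases "tl (tl (tl ps))"; auto)
  then show ?thesis by simp
qed

lemma L1:
  assumes T: "trigraph V \<theta>" and BV: "B \<subseteq> V"
    and Bcl: "\<And>u w. u \<in> B \<Longrightarrow> w \<in> B \<Longrightarrow> u \<noteq> w \<Longrightarrow> \<theta> u w = 1"
    and c: "b1 \<in> B" "b2 \<in> B" "b1 \<noteq> b2" and nc: "\<not> connected_set \<theta> (V - B)"
  shows "balanced_skew_partition V \<theta> (V - B) B"
proof -
  have na: "\<not> anticonnected_set \<theta> B"
    by (rule not_anticonnected_I[of b1 B b2 "{b1}"]) (use c Bcl in \<open>auto simp: antiadj_def\<close>)
  have np: False if p: "is_path V \<theta> ps" "odd (length ps - 1)" "length ps - 1 > 1"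
     "hd ps \<in> B" "last ps \<in> B" for ps
  proof -
    have n4: "length ps \<ge> 4" using len4 p by blast
    have ne: "ps \<noteq> []" using n4 by auto
    have h: "hd ps = ps!0" "last ps = ps!(length ps - 1)" using ne by (auto simp: hd_conv_nth last_conv_nth)
    have d: "distinct ps" using p unfolding is_path_def by auto
    have "ps!0 \<noteq> ps!(length ps - 1)" by (rule dist_nth[OF d]) (use n4 in auto)
    moreover have "antiadj \<theta> (ps!0) (ps!(length ps - 1))" using p(1) n4 unfolding is_path_def by auto
    ultimately show False using Bcl[of "ps!0" "ps!(length ps - 1)"] p h by (auto simp: antiadj_def)
  qed
  have nap: False if p: "is_antipath V \<theta> ps" "odd (length ps - 1)" "length ps - 1 > 1"
     "set (butlast (tl ps)) \<subseteq> B" for ps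
  proof -
    have n4: "length ps \<ge> 4" using len4 p by blast
    have d: "distinct ps" using p unfolding is_antipath_def by auto
    have "ps!1 \<noteq> ps!2" by (rule dist_nth[OF d]) (use n4 in auto)
    moreover have "antiadj \<theta> (ps!1) (ps!2)" using p(1) n4 unfolding is_antipath_def by auto
    moreover have "ps!1 \<in> B" "ps!2 \<in> B" using interior12[OF n4] p(4) by auto
    ultimately show False using Bcl[of "ps!1" "ps!2"] by (auto simp: antiadj_def)
  qed
  show ?thesis unfolding balanced_skew_partition_def skew_partition_def
    using BV na nc np nap by blast
qed

lemma L2:
  assumes T: "trigraph V \<theta>" and ab: "a \<in> V" "b \<in> V" "a \<noteq> b" "\<theta> a b = -1"
    and na: "\<not> anticonnected_set \<theta> (V - {a,b})"
  shows "balanced_skew_partition V \<theta> {a,b} (V - {a,b})"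
proof -
  have ba: "\<theta> b a = -1" using tri_sym[OF T] ab by metis
  have nc: "\<not> connected_set \<theta> {a,b}"
    by (rule not_connected_I[of a "{a,b}" b "{a}"]) (use ab ba in \<open>auto simp: adj_def\<close>)
  have np: False if p: "is_path V \<theta> ps" "odd (length ps - 1)" "length ps - 1 > 1"
     "set (butlast (tl ps)) \<subseteq> {a,b}" for ps
  proof -
    have n4: "length ps \<ge> 4" using len4 p by blast
    have d: "distinct ps" using p unfolding is_path_def by auto
    have "ps!1 \<noteq> ps!2" using d n4 by (simp add: nth_eq_iff_index_eq)
    moreover have "adj \<theta> (ps!1) (ps!2)" using p(1) n4 unfolding is_path_def by auto
    moreover have "ps!1 \<in> {a,b}" "ps!2 \<in> {a,b}" using interior12[OF n4] p(4) by auto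
    ultimately show False using ab ba by (auto simp: adj_def)
  qed
  have nap: False if p: "is_antipath V \<theta> ps" "odd (length ps - 1)" "length ps - 1 > 1"
     "hd ps \<in> {a,b}" "last ps \<in> {a,b}" for ps
  proof -
    have n4: "length ps \<ge> 4" using len4 p by blast
    have ne: "ps \<noteq> []" using n4 by auto
    have h: "hd ps = ps!0" "last ps = ps!(length ps - 1)" using ne by (auto simp: hd_conv_nth last_conv_nth)
    have d: "distinct ps" using p unfolding is_antipath_def by auto
    have "ps!0 \<noteq> ps!(length ps - 1)" by (rule dist_nth[OF d]) (use n4 in auto)
    moreover have "adj \<theta> (ps!0) (ps!(length ps - 1))" using p(1) n4 unfolding is_antipath_def by auto
    ultimately show False using p h ab ba by (auto simp: adj_def)
  qed
  have "{a,b} \<union> (V - {a,b}) = V" using ab by auto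
  then show ?thesis unfolding balanced_skew_partition_def skew_partition_def
    using na nc np nap by blast
qed




lemma adj_sym: "trigraph V \<theta> \<Longrightarrow> u \<in> V \<Longrightarrow> v \<in> V \<Longrightarrow> adj \<theta> u v \<Longrightarrow> adj \<theta> v u"
  by (cases "u = v") (auto simp: adj_def dest: tri_sym)

lemma antiadj_sym: "trigraph V \<theta> \<Longrightarrow> u \<in> V \<Longrightarrow> v \<in> V \<Longrightarrow> antiadj \<theta> u v \<Longrightarrow> antiadj \<theta> v u"
  by (cases "u = v") (auto simp: antiadj_def dest: tri_sym)

lemma hole5:
  assumes T: "trigraph V \<theta>" and d: "distinct [h0,h1,h2,h3,h4]" and s: "set [h0,h1,h2,h3,h4] \<subseteq> V"
    and a: "adj \<theta> h0 h1" "adj \<theta> h1 h2" "adj \<theta> h2 h3" "adj \<theta> h3 h4" "adj \<theta> h4 h0"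
    and n: "antiadj \<theta> h0 h2" "antiadj \<theta> h0 h3" "antiadj \<theta> h1 h3" "antiadj \<theta> h1 h4" "antiadj \<theta> h2 h4"
  shows "is_hole V \<theta> [h0,h1,h2,h3,h4]"
proof -
  have V: "h0 \<in> V" "h1 \<in> V" "h2 \<in> V" "h3 \<in> V" "h4 \<in> V" using s by auto
  note a' = a adj_sym[OF T V(1) V(2) a(1)] adj_sym[OF T V(2) V(3) a(2)] adj_sym[OF T V(3) V(4) a(3)] adj_sym[OF T V(4) V(5) a(4)] adj_sym[OF T V(5) V(1) a(5)]
  note n' = n antiadj_sym[OF T V(1) V(3) n(1)] antiadj_sym[OF T V(1) V(4) n(2)] antiadj_sym[OF T V(2) V(4) n(3)] antiadj_sym[OF T V(2) V(5) n(4)] antiadj_sym[OF T V(3) V(5) n(5)]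
  have *: "\<forall>i<5. \<forall>j<5. i \<noteq> j \<longrightarrow>
        (cyc_consec 5 i j \<longrightarrow> adj \<theta> ([h0,h1,h2,h3,h4] ! i) ([h0,h1,h2,h3,h4] ! j)) \<and>
        (\<not> cyc_consec 5 i j \<longrightarrow> antiadj \<theta> ([h0,h1,h2,h3,h4] ! i) ([h0,h1,h2,h3,h4] ! j))"
  proof (intro allI impI)
    fix i j :: nat assume "i<5" "j<5" "i\<noteq>j"
    then have "i = 0 \<or> i = 1 \<or> i = 2 \<or> i = 3 \<or> i = 4"
      "j = 0 \<or> j = 1 \<or> j = 2 \<or> j = 3 \<or> j = 4" by auto
    then show "(cyc_consec 5 i j \<longrightarrow> adj \<theta> ([h0,h1,h2,h3,h4] ! i) ([h0,h1,h2,h3,h4] ! j)) \<and>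
        (\<not> cyc_consec 5 i j \<longrightarrow> antiadj \<theta> ([h0,h1,h2,h3,h4] ! i) ([h0,h1,h2,h3,h4] ! j))"
      using \<open>i\<noteq>j\<close> by (elim disjE; simp add: cyc_consec_def a' n')
  qed
  have L: "length [h0,h1,h2,h3,h4] = 5" by simp
  show ?thesis unfolding is_hole_def L using * d s by simp
qed

lemma antihole_intro: "length hs = n \<Longrightarrow> n \<ge> 5 \<Longrightarrow> distinct hs \<Longrightarrow> set hs \<subseteq> V \<Longrightarrow>
   (\<forall>i<n. \<forall>j<n. i \<noteq> j \<longrightarrow> (cyc_consec n i j \<longrightarrow> antiadj \<theta> (hs ! i) (hs ! j)) \<and>
        (\<not> cyc_consec n i j \<longrightarrow> adj \<theta> (hs ! i) (hs ! j))) \<Longrightarrow> is_antihole V \<theta> hs"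
  unfolding is_antihole_def by simp

lemma antihole6:
  assumes T: "trigraph V \<theta>" and d: "distinct [h0,h1,h2,h3,h4,h5]" and s: "set [h0,h1,h2,h3,h4,h5] \<subseteq> V"
    and a: "antiadj \<theta> h0 h1" "antiadj \<theta> h1 h2" "antiadj \<theta> h2 h3" "antiadj \<theta> h3 h4" "antiadj \<theta> h4 h5" "antiadj \<theta> h5 h0"
    and n: "adj \<theta> h0 h2" "adj \<theta> h0 h3" "adj \<theta> h0 h4" "adj \<theta> h1 h3" "adj \<theta> h1 h4" "adj \<theta> h1 h5"
           "adj \<theta> h2 h4" "adj \<theta> h2 h5" "adj \<theta> h3 h5"
  shows "is_antihole V \<theta> [h0,h1,h2,h3,h4,h5]"
proof -
  have V: "h0 \<in> V" "h1 \<in> V" "h2 \<in> V" "h3 \<in> V" "h4 \<in> V" "h5 \<in> V" using s by auto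
  note a' = a antiadj_sym[OF T V(1) V(2) a(1)] antiadj_sym[OF T V(2) V(3) a(2)] antiadj_sym[OF T V(3) V(4) a(3)] antiadj_sym[OF T V(4) V(5) a(4)] antiadj_sym[OF T V(5) V(6) a(5)] antiadj_sym[OF T V(6) V(1) a(6)]
  note n' = n adj_sym[OF T V(1) V(3) n(1)] adj_sym[OF T V(1) V(4) n(2)] adj_sym[OF T V(1) V(5) n(3)] adj_sym[OF T V(2) V(4) n(4)] adj_sym[OF T V(2) V(5) n(5)]
     adj_sym[OF T V(2) V(6) n(6)] adj_sym[OF T V(3) V(5) n(7)] adj_sym[OF T V(3) V(6) n(8)] adj_sym[OF T V(4) V(6) n(9)]
  have *: "\<forall>i<6. \<forall>j<6. i \<noteq> j \<longrightarrow>
        (cyc_consec 6 i j \<longrightarrow> antiadj \<theta> ([h0,h1,h2,h3,h4,h5] ! i) ([h0,h1,h2,h3,h4,h5] ! j)) \<and>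
        (\<not> cyc_consec 6 i j \<longrightarrow> adj \<theta> ([h0,h1,h2,h3,h4,h5] ! i) ([h0,h1,h2,h3,h4,h5] ! j))"
  proof (intro allI impI)
    fix i j :: nat assume "i<6" "j<6" "i\<noteq>j"
    then have "i = 0 \<or> i = 1 \<or> i = 2 \<or> i = 3 \<or> i = 4 \<or> i = 5"
      "j = 0 \<or> j = 1 \<or> j = 2 \<or> j = 3 \<or> j = 4 \<or> j = 5" by auto
    then show "(cyc_consec 6 i j \<longrightarrow> antiadj \<theta> ([h0,h1,h2,h3,h4,h5] ! i) ([h0,h1,h2,h3,h4,h5] ! j)) \<and>
        (\<not> cyc_consec 6 i j \<longrightarrow> adj \<theta> ([h0,h1,h2,h3,h4,h5] ! i) ([h0,h1,h2,h3,h4,h5] ! j))"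
      using \<open>i\<noteq>j\<close> by (elim disjE; simp add: cyc_consec_def a' n')
  qed
  show ?thesis by (rule antihole_intro[where n=6, OF _ _ d s *]) simp_all
qed




lemma twoK2:
  assumes fX: "finite X" and ne: "X \<noteq> {}"
    and h2: "\<forall>b\<in>Y. \<exists>a\<in>X. H a b" and h3: "\<forall>a\<in>X. \<exists>b\<in>Y. \<not> H a b"
  shows "\<exists>a1\<in>X. \<exists>a2\<in>X. \<exists>b1\<in>Y. \<exists>b2\<in>Y. H a1 b1 \<and> H a2 b2 \<and> \<not> H a1 b2 \<and> \<not> H a2 b1"
proof -
  define NH where "NH a = {b\<in>Y. H a b}" for a
  have f1: "finite (NH ` X)" using fX by simp
  have f2: "NH ` X \<noteq> {}" using ne by simp
  obtain m where m: "m \<in> NH ` X" "\<forall>b\<in>NH ` X. m \<subseteq> b \<longrightarrow> m = b"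
    using finite_has_maximal[OF f1 f2] by (elim bexE)
  then obtain a1 where a1: "a1 \<in> X" "m = NH a1" by auto
  obtain b2 where b2: "b2 \<in> Y" "\<not> H a1 b2" using h3 a1 by blast
  obtain a2 where a2: "a2 \<in> X" "H a2 b2" using h2 b2 by blast
  have "\<not> NH a1 \<subseteq> NH a2"
  proof
    assume "NH a1 \<subseteq> NH a2"
    then have "NH a1 = NH a2" using m a1 a2 by auto
    then show False using a2 b2 unfolding NH_def by auto
  qed
  then obtain b1 where "b1 \<in> Y" "H a1 b1" "\<not> H a2 b1" unfolding NH_def by auto
  then show ?thesis using a1 a2 b2 by blast
qed

lemma two_elems:
  assumes "finite A" "card A \<ge> 2"
  obtains a b where "a \<in> A" "b \<in> A" "a \<noteq> b"
proof -
  have "A \<noteq> {}" using assms by auto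
  then obtain a where a: "a \<in> A" by auto
  have "card (A - {a}) = card A - 1" using assms(1) a by simp
  then have "card (A - {a}) \<noteq> 0" using assms(2) by simp
  then have "A - {a} \<noteq> {}" by (intro notI) simp
  then obtain b where "b \<in> A - {a}" by auto
  then show ?thesis using a that by auto
qed

lemma two_elems': "finite A \<Longrightarrow> card A \<ge> 2 \<Longrightarrow> \<exists>a\<in>A. \<exists>b\<in>A. a \<noteq> b"
  by (erule two_elems) auto

locale small =
  fixes V :: "'a set" and \<theta> :: "'a \<Rightarrow> 'a \<Rightarrow> int" and x y :: 'a
  assumes T: "trigraph V \<theta>" and Bg: "berge V \<theta>"
    and NB: "\<not> (\<exists>A B. balanced_skew_partition V \<theta> A B)"
    and NA6: "\<not> (\<exists>hs. is_antihole V \<theta> hs \<and> length hs = 6)"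
    and cV: "card V \<ge> 6" and xV: "x \<in> V" and yV: "y \<in> V" and xy: "x \<noteq> y" and t0: "\<theta> x y = 0"
    and z0: "\<And>u w. u \<in> V \<Longrightarrow> w \<in> V \<Longrightarrow> u \<noteq> w \<Longrightarrow> \<theta> u w = 0 \<Longrightarrow> {u,w} = {x,y}"
    and nn: "nbhd V \<theta> x \<inter> nbhd V \<theta> y = {}"
    and clx: "is_clique \<theta> (V - ({x,y} \<union> nbhd V \<theta> x))"
    and cly: "is_clique \<theta> (V - ({x,y} \<union> nbhd V \<theta> y))"
begin

lemma swap: "small V \<theta> y x"
proof
  show "y \<noteq> x" using xy by simp
  show "\<theta> y x = 0" using t0 tri_sym[OF T xV yV xy] by simp
  show "\<And>u w. u \<in> V \<Longrightarrow> w \<in> V \<Longrightarrow> u \<noteq> w \<Longrightarrow> \<theta> u w = 0 \<Longrightarrow> {u,w} = {y,x}"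
  proof -
    fix u w assume "u \<in> V" "w \<in> V" "u \<noteq> w" "\<theta> u w = 0"
    then have "{u,w} = {x,y}" by (rule z0)
    then show "{u,w} = {y,x}" by (simp only: insert_commute)
  qed
  show "nbhd V \<theta> y \<inter> nbhd V \<theta> x = {}" using nn by (simp only: Int_commute)
  have e: "{y,x} = {x,y}" by (simp only: insert_commute)
  show "is_clique \<theta> (V - ({y,x} \<union> nbhd V \<theta> y))" using cly by (simp only: e)
  show "is_clique \<theta> (V - ({y,x} \<union> nbhd V \<theta> x))" using clx by (simp only: e)
qed (fact T Bg NB NA6 cV xV yV)+

lemma fV: "finite V" using T unfolding trigraph_def by simp

lemma sym: "u \<in> V \<Longrightarrow> w \<in> V \<Longrightarrow> \<theta> u w = \<theta> w u"
  by (cases "u = w") (auto dest: tri_sym[OF T])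

lemma vx: assumes "r \<in> V - {x,y}"
  shows "\<theta> x r = (if r \<in> nbhd V \<theta> x then 1 else -1)" "\<theta> r x = (if r \<in> nbhd V \<theta> x then 1 else -1)"
proof -
  have r: "r \<in> V" "r \<noteq> x" "r \<noteq> y" using assms by auto
  have "\<theta> r x \<noteq> 0"
  proof
    assume "\<theta> r x = 0"
    then have "{r,x} = {x,y}" using z0[of r x] r xV by auto
    then show False using r by (auto simp: doubleton_eq_iff)
  qed
  then have "\<theta> r x = -1 \<or> \<theta> r x = 1" using tri_val[OF T r(1) xV r(2)] by auto
  moreover have "r \<in> nbhd V \<theta> x \<longleftrightarrow> \<theta> r x \<in> {0,1}" using r unfolding nbhd_def adj_def by auto
  ultimately show "\<theta> r x = (if r \<in> nbhd V \<theta> x then 1 else -1)" by auto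
  then show "\<theta> x r = (if r \<in> nbhd V \<theta> x then 1 else -1)" using sym[OF xV r(1)] by simp
qed

lemma vR: assumes "u \<in> V - {x,y}" "w \<in> V - {x,y}" "u \<noteq> w"
  shows "\<theta> u w = 1 \<or> \<theta> u w = -1"
proof -
  have "\<theta> u w \<noteq> 0"
  proof
    assume "\<theta> u w = 0"
    then have "{u,w} = {x,y}" using z0[of u w] assms by auto
    then show False using assms by (auto simp: doubleton_eq_iff)
  qed
  then show ?thesis using tri_val[OF T, of u w] assms by auto
qed

lemma cX: assumes "u \<in> V - {x,y}" "w \<in> V - {x,y}" "u \<noteq> w" "u \<notin> nbhd V \<theta> x" "w \<notin> nbhd V \<theta> x"
  shows "\<theta> u w = 1"
proof -
  have "adj \<theta> u w" using clx assms unfolding is_clique_def by auto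
  then show ?thesis using vR[OF assms(1-3)] unfolding adj_def by auto
qed

lemma cY: assumes "u \<in> V - {x,y}" "w \<in> V - {x,y}" "u \<noteq> w" "u \<notin> nbhd V \<theta> y" "w \<notin> nbhd V \<theta> y"
  shows "\<theta> u w = 1"
proof -
  have "adj \<theta> u w" using cly assms unfolding is_clique_def by auto
  then show ?thesis using vR[OF assms(1-3)] unfolding adj_def by auto
qed

lemma vy: assumes "r \<in> V - {x,y}"
  shows "\<theta> y r = (if r \<in> nbhd V \<theta> y then 1 else -1)" "\<theta> r y = (if r \<in> nbhd V \<theta> y then 1 else -1)"
  using small.vx[OF swap, of r] assms by (auto simp: insert_commute)

lemma cardR: "card (V - {x,y}) \<ge> 4"
proof -
  have "card (V - {x,y}) = card V - card {x,y}" using xV yV fV by (intro card_Diff_subset) auto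
  then show ?thesis using cV xy by auto
qed


lemma dNX: "r \<in> nbhd V \<theta> x \<Longrightarrow> r \<notin> nbhd V \<theta> y" using nn by auto

lemma berge_hole5: "is_hole V \<theta> [a,b,c,d,e] \<Longrightarrow> False"
  using Bg unfolding berge_def by force

lemma Znonempty:
  assumes z: "z \<in> V - {x,y}" "z \<notin> nbhd V \<theta> x" "z \<notin> nbhd V \<theta> y"
  shows False
proof (cases "\<exists>a\<in>V - {x,y}. a \<in> nbhd V \<theta> x \<and> (\<exists>b\<in>V - {x,y}. b \<in> nbhd V \<theta> y \<and> \<theta> a b = -1)")
  case True
  then obtain a b where ab: "a \<in> V - {x,y}" "a \<in> nbhd V \<theta> x" "b \<in> V - {x,y}" "b \<in> nbhd V \<theta> y" "\<theta> a b = -1"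
    by blast
  have na: "a \<notin> nbhd V \<theta> y" using dNX ab by blast
  have nb: "b \<notin> nbhd V \<theta> x" using dNX ab by blast
  have d: "distinct [z,a,x,y,b]" using z ab na nb xy by auto
  have s: "set [z,a,x,y,b] \<subseteq> V" using z ab xV yV by auto
  have "\<theta> z a = 1" using cY[of z a] z ab na by auto
  moreover have "\<theta> a x = 1" using vx(2)[of a] ab by simp
  moreover have "\<theta> y b = 1" using vy(1)[of b] ab by simp
  moreover have "\<theta> b z = 1" using cX[of b z] z ab nb by auto
  moreover have "\<theta> z x = -1" using vx(2)[of z] z by simp
  moreover have "\<theta> z y = -1" using vy(2)[of z] z by simp
  moreover have "\<theta> a y = -1" using vy(2)[of a] ab na by simp
  moreover have "\<theta> x b = -1" using vx(1)[of b] ab nb by simp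
  ultimately have "is_hole V \<theta> [z,a,x,y,b]"
    using hole5[OF T d s] ab t0 unfolding adj_def antiadj_def by simp
  then show False by (rule berge_hole5)
next
  case False
  have Rc: "\<theta> u w = 1" if uw: "u \<in> V - {x,y}" "w \<in> V - {x,y}" "u \<noteq> w" for u w
  proof (cases "u \<notin> nbhd V \<theta> x \<and> w \<notin> nbhd V \<theta> x")
    case True then show ?thesis using cX uw by blast
  next
    case c1: False
    show ?thesis
    proof (cases "u \<notin> nbhd V \<theta> y \<and> w \<notin> nbhd V \<theta> y")
      case True then show ?thesis using cY uw by blast
    next
      case c2: False
      have "(u \<in> nbhd V \<theta> x \<and> w \<in> nbhd V \<theta> y) \<or> (w \<in> nbhd V \<theta> x \<and> u \<in> nbhd V \<theta> y)"
        using c1 c2 dNX by blast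
      then have "\<theta> u w \<noteq> -1" using False uw sym[of u w] by auto
      then show ?thesis using vR[OF uw] by auto
    qed
  qed
  define B where "B = V - {x,y} - {z}"
  have fR: "finite (V - {x,y})" using fV by simp
  have "card B = card (V - {x,y}) - 1" unfolding B_def using z fR by simp
  then have "card B \<ge> 2" using cardR by simp
  moreover have "finite B" unfolding B_def using fV by simp
  ultimately have "\<exists>b1\<in>B. \<exists>b2\<in>B. b1 \<noteq> b2" by (intro two_elems')
  then obtain b1 b2 where b: "b1 \<in> B" "b2 \<in> B" "b1 \<noteq> b2" by blast
  have VB: "V - B = {x,y,z}" unfolding B_def using z xV yV by auto
  have nc: "\<not> connected_set \<theta> (V - B)" unfolding VB
  proof (rule not_connected_I[of x _ z "{x,y}"])
    fix a c assume "a \<in> {x,y,z}" "c \<in> {x,y,z}" "a \<in> {x,y}" "c \<notin> {x,y}"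
    then have "c = z" "a = x \<or> a = y" by auto
    moreover have "\<theta> x z = -1" using vx(1)[of z] z by simp
    moreover have "\<theta> y z = -1" using vy(1)[of z] z by simp
    ultimately show "\<not> adj \<theta> a c" unfolding adj_def by auto
  qed (use z in auto)
  have "balanced_skew_partition V \<theta> (V - B) B"
    by (rule L1[OF T _ _ b nc]) (auto simp: B_def intro: Rc)
  then show False using NB by blast
qed

lemma side1:
  assumes w: "w \<in> V - {x,y}" "w \<in> nbhd V \<theta> y" and u: "u \<in> V - {x,y}" "u \<in> nbhd V \<theta> y" "u \<noteq> w"
    and c: "\<forall>a\<in>V - {x,y}. a \<in> nbhd V \<theta> x \<longrightarrow> \<theta> w a = 1"
  shows False
proof -
  have nux: "u \<notin> nbhd V \<theta> x" "w \<notin> nbhd V \<theta> x" using dNX u w by blast+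
  have xu: "\<theta> x u = -1" using vx(1)[of u] u nux by simp
  have na: "\<not> anticonnected_set \<theta> (V - {x,u})"
  proof (rule not_anticonnected_I[of w _ y "{w}"])
    fix a b assume ab: "a \<in> V - {x,u}" "b \<in> V - {x,u}" "a \<in> {w}" "b \<notin> {w}"
    have "\<theta> w b = 1"
    proof (cases "b = y")
      case True then show ?thesis using vy(2)[of w] w by simp
    next
      case False
      then have bR: "b \<in> V - {x,y}" using ab by auto
      show ?thesis
      proof (cases "b \<in> nbhd V \<theta> x")
        case True then show ?thesis using c bR by auto
      next
        case False then show ?thesis using cX[of w b] bR w nux ab by auto
      qed
    qed
    then show "\<not> antiadj \<theta> a b" using ab unfolding antiadj_def by auto
  qed (use w u xy yV in auto)
  have "balanced_skew_partition V \<theta> {x,u} (V - {x,u})"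
    by (rule L2[OF T xV _ _ xu na]) (use u in auto)
  then show False using NB by blast
qed

lemma side2:
  assumes u: "u \<in> V - {x,y}" "u \<in> nbhd V \<theta> y" and w: "w \<in> V - {x,y}" "w \<in> nbhd V \<theta> y" "u \<noteq> w"
    and c: "\<forall>a\<in>V - {x,y}. a \<in> nbhd V \<theta> x \<longrightarrow> \<theta> u a = -1"
    and RZ: "V - {x,y} \<subseteq> nbhd V \<theta> x \<union> nbhd V \<theta> y"
  shows False
proof -
  have nux: "u \<notin> nbhd V \<theta> x" using dNX u by blast
  define B where "B = {y} \<union> ((V - {x,y}) \<inter> nbhd V \<theta> y - {u})"
  have Bc: "\<theta> p q = 1" if pq: "p \<in> B" "q \<in> B" "p \<noteq> q" for p q
  proof -
    have "p = y \<or> (p \<in> V - {x,y} \<and> p \<in> nbhd V \<theta> y)" "q = y \<or> (q \<in> V - {x,y} \<and> q \<in> nbhd V \<theta> y)"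
      using pq unfolding B_def by auto
    then show ?thesis
    proof (elim disjE conjE)
      assume "p = y" "q = y" then show ?thesis using pq by simp
    next
      assume "p = y" "q \<in> V - {x,y}" "q \<in> nbhd V \<theta> y" then show ?thesis using vy(1)[of q] by simp
    next
      assume "q = y" "p \<in> V - {x,y}" "p \<in> nbhd V \<theta> y" then show ?thesis using vy(2)[of p] by simp
    next
      assume "p \<in> V - {x,y}" "p \<in> nbhd V \<theta> y" "q \<in> V - {x,y}" "q \<in> nbhd V \<theta> y"
      then show ?thesis using cX[of p q] dNX pq by blast
    qed
  qed
  have nc: "\<not> connected_set \<theta> (V - B)"
  proof (rule not_connected_I[of u _ x "{u}"])
    fix a b assume ab: "a \<in> V - B" "b \<in> V - B" "a \<in> {u}" "b \<notin> {u}"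
    have "\<theta> u b = -1"
    proof (cases "b = x")
      case True then show ?thesis using vx(2)[of u] u nux by simp
    next
      case False
      then have "b \<in> V - {x,y}" "b \<notin> nbhd V \<theta> y" using ab unfolding B_def by auto
      then have "b \<in> V - {x,y}" "b \<in> nbhd V \<theta> x" using RZ by auto
      then show ?thesis using c by auto
    qed
    then show "\<not> adj \<theta> a b" using ab unfolding adj_def by auto
  qed (use u xy xV in \<open>auto simp: B_def\<close>)
  have "balanced_skew_partition V \<theta> (V - B) B"
    by (rule L1[OF T _ _ _ _ _ nc, of y w]) (use Bc w yV in \<open>auto simp: B_def\<close>)
  then show False using NB by blast
qed


lemma oneside:
  assumes RZ: "V - {x,y} \<subseteq> nbhd V \<theta> x \<union> nbhd V \<theta> y" and cx: "card ((V - {x,y}) \<inter> nbhd V \<theta> x) \<le> 1"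
  shows False
proof -
  have fR: "finite (V - {x,y})" using fV by simp
  have e: "V - {x,y} = ((V - {x,y}) \<inter> nbhd V \<theta> x) \<union> ((V - {x,y}) \<inter> nbhd V \<theta> y)" using RZ by auto
  have "card (((V - {x,y}) \<inter> nbhd V \<theta> x) \<union> ((V - {x,y}) \<inter> nbhd V \<theta> y)) \<le> card ((V - {x,y}) \<inter> nbhd V \<theta> x) + card ((V - {x,y}) \<inter> nbhd V \<theta> y)"
    by (rule card_Un_le)
  then have "card (V - {x,y}) \<le> card ((V - {x,y}) \<inter> nbhd V \<theta> x) + card ((V - {x,y}) \<inter> nbhd V \<theta> y)"
    using e by simp
  then have "card ((V - {x,y}) \<inter> nbhd V \<theta> y) \<ge> 2" using cardR cx by simp
  moreover have "finite ((V - {x,y}) \<inter> nbhd V \<theta> y)" using fR by simp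
  ultimately have "\<exists>u\<in>(V - {x,y}) \<inter> nbhd V \<theta> y. \<exists>w\<in>(V - {x,y}) \<inter> nbhd V \<theta> y. u \<noteq> w" by (intro two_elems')
  then obtain u w where uw: "u \<in> (V - {x,y}) \<inter> nbhd V \<theta> y" "w \<in> (V - {x,y}) \<inter> nbhd V \<theta> y" "u \<noteq> w"
    by blast
  have u1: "u \<in> V - {x,y}" "u \<in> nbhd V \<theta> y" and w1: "w \<in> V - {x,y}" "w \<in> nbhd V \<theta> y"
    using uw by auto
  show False
  proof (cases "(V - {x,y}) \<inter> nbhd V \<theta> x = {}")
    case True
    then have "\<forall>a\<in>V - {x,y}. a \<in> nbhd V \<theta> x \<longrightarrow> \<theta> u a = -1" by blast
    then show False by (rule side2[OF u1 w1 uw(3) _ RZ])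
  next
    case False
    then have "card ((V - {x,y}) \<inter> nbhd V \<theta> x) \<noteq> 0" using fR by simp
    then have "card ((V - {x,y}) \<inter> nbhd V \<theta> x) = 1" using cx by linarith
    then obtain a where a: "(V - {x,y}) \<inter> nbhd V \<theta> x = {a}" by (rule card_1_singletonE)
    then have aR: "a \<in> V - {x,y}" "a \<in> nbhd V \<theta> x" by auto
    have "u \<noteq> a" using dNX aR u1 by blast
    then have "\<theta> u a = 1 \<or> \<theta> u a = -1" using vR[OF u1(1) aR(1)] by simp
    then show False
    proof
      assume ua: "\<theta> u a = 1"
      have "\<forall>a'\<in>V - {x,y}. a' \<in> nbhd V \<theta> x \<longrightarrow> \<theta> u a' = 1"
      proof (intro ballI impI)
        fix a' assume "a' \<in> V - {x,y}" "a' \<in> nbhd V \<theta> x"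
        then have "a' = a" using a by blast
        then show "\<theta> u a' = 1" using ua by simp
      qed
      then show False by (rule side1[OF u1 w1 uw(3)[symmetric]])
    next
      assume ua: "\<theta> u a = -1"
      have "\<forall>a'\<in>V - {x,y}. a' \<in> nbhd V \<theta> x \<longrightarrow> \<theta> u a' = -1"
      proof (intro ballI impI)
        fix a' assume "a' \<in> V - {x,y}" "a' \<in> nbhd V \<theta> x"
        then have "a' = a" using a by blast
        then show "\<theta> u a' = -1" using ua by simp
      qed
      then show False by (rule side2[OF u1 w1 uw(3) _ RZ])
    qed
  qed
qed


lemma final:
  assumes RZ: "V - {x,y} \<subseteq> nbhd V \<theta> x \<union> nbhd V \<theta> y"
  shows False
proof -
  let ?R = "V - {x,y}"
  let ?X = "?R \<inter> nbhd V \<theta> x"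
  let ?Y = "?R \<inter> nbhd V \<theta> y"
  have fR: "finite ?R" using fV by simp
  have e: "{y,x} = {x,y}" by (simp only: insert_commute)
  show False
  proof (cases "card ?X \<le> 1")
    case True then show False by (rule oneside[OF RZ])
  next
    case cX2: False
    show False
    proof (cases "card ?Y \<le> 1")
      case True
      have RZ': "V - {y,x} \<subseteq> nbhd V \<theta> y \<union> nbhd V \<theta> x" using RZ unfolding e by blast
      have "card ((V - {y,x}) \<inter> nbhd V \<theta> y) \<le> 1" using True unfolding e .
      then show False by (rule small.oneside[OF swap RZ'])
    next
      case cY2: False
      have fX: "finite ?X" "finite ?Y" using fR by auto
      have nc: "\<exists>a\<in>?X. \<theta> b a \<noteq> 1" if b: "b \<in> ?Y" for b
      proof (rule ccontr)
        assume "\<not> (\<exists>a\<in>?X. \<theta> b a \<noteq> 1)"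
        then have c: "\<forall>a\<in>?R. a \<in> nbhd V \<theta> x \<longrightarrow> \<theta> b a = 1" by blast
        have "card ?Y \<ge> 2" using cY2 by simp
        then obtain u where u: "u \<in> ?Y" "u \<noteq> b" using two_elems'[OF fX(2)] by blast
        have b1: "b \<in> ?R" "b \<in> nbhd V \<theta> y" and u1: "u \<in> ?R" "u \<in> nbhd V \<theta> y" using b u by auto
        show False by (rule side1[OF b1 u1 u(2) c])
      qed
      have na: "\<exists>b\<in>?Y. \<theta> a b \<noteq> -1" if a: "a \<in> ?X" for a
      proof (rule ccontr)
        assume "\<not> (\<exists>b\<in>?Y. \<theta> a b \<noteq> -1)"
        then have c: "\<forall>b\<in>V - {y,x}. b \<in> nbhd V \<theta> y \<longrightarrow> \<theta> a b = -1" unfolding e by blast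
        have "card ?X \<ge> 2" using cX2 by simp
        then obtain u where u: "u \<in> ?X" "u \<noteq> a" using two_elems'[OF fX(1)] by blast
        have a1: "a \<in> V - {y,x}" "a \<in> nbhd V \<theta> x" and u1: "u \<in> V - {y,x}" "u \<in> nbhd V \<theta> x"
          using a u unfolding e by auto
        have RZ': "V - {y,x} \<subseteq> nbhd V \<theta> y \<union> nbhd V \<theta> x" using RZ unfolding e by blast
        show False by (rule small.side2[OF swap a1 u1 u(2)[symmetric] c RZ'])
      qed
      have h2: "\<forall>b\<in>?Y. \<exists>a\<in>?X. \<theta> a b = -1"
      proof
        fix b assume b: "b \<in> ?Y"
        then obtain a where a: "a \<in> ?X" "\<theta> b a \<noteq> 1" using nc by blast
        have "b \<noteq> a" using a b dNX by blast
        then have "\<theta> b a = -1" using vR[of b a] a b by auto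
        then have "\<theta> a b = -1" using sym[of a b] a b by auto
        then show "\<exists>a\<in>?X. \<theta> a b = -1" using a by blast
      qed
      have h3: "\<forall>a\<in>?X. \<exists>b\<in>?Y. \<not> \<theta> a b = -1" using na by blast
      have neX: "?X \<noteq> {}" using cX2 by auto
      obtain a1 a2 b1 b2 where ab: "a1 \<in> ?X" "a2 \<in> ?X" "b1 \<in> ?Y" "b2 \<in> ?Y"
        "\<theta> a1 b1 = -1" "\<theta> a2 b2 = -1" "\<theta> a1 b2 \<noteq> -1" "\<theta> a2 b1 \<noteq> -1"
        using twoK2[OF fX(1) neX h2 h3] by blast
      have nb: "b1 \<notin> nbhd V \<theta> x" "b2 \<notin> nbhd V \<theta> x" using ab dNX by blast+
      have na': "a1 \<notin> nbhd V \<theta> y" "a2 \<notin> nbhd V \<theta> y" using ab dNX by blast+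
      have d: "distinct [x,b1,a1,y,a2,b2]" using ab nb na' xy by auto
      have s: "set [x,b1,a1,y,a2,b2] \<subseteq> V" using ab xV yV by auto
      have v1: "\<theta> x b1 = -1" "\<theta> b2 x = -1" "\<theta> x a1 = 1" "\<theta> x a2 = 1"
        using vx[of b1] vx[of b2] vx[of a1] vx[of a2] ab nb by auto
      have v2: "\<theta> a1 y = -1" "\<theta> y a2 = -1" "\<theta> b1 y = 1" "\<theta> y b2 = 1"
        using vy[of b1] vy[of b2] vy[of a1] vy[of a2] ab na' by auto
      have v3: "\<theta> b1 a1 = -1" using sym[of b1 a1] ab by auto
      have v4: "\<theta> b1 a2 = 1" using sym[of b1 a2] vR[of a2 b1] ab nb by auto
      have v5: "\<theta> a1 b2 = 1" using vR[of a1 b2] ab nb by auto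
      have v6: "\<theta> b1 b2 = 1" using cX[of b1 b2] ab nb d by auto
      have v7: "\<theta> a1 a2 = 1" using cY[of a1 a2] ab na' d by auto
      have "is_antihole V \<theta> [x,b1,a1,y,a2,b2]"
        by (rule antihole6[OF T d s]) (simp_all add: adj_def antiadj_def v1 v2 v3 v4 v5 v6 v7 t0 ab)
      then show False using NA6 by force
    qed
  qed
qed

lemma small_false: False
proof (cases "V - {x,y} \<subseteq> nbhd V \<theta> x \<union> nbhd V \<theta> y")
  case True then show False by (rule final)
next
  case False
  then obtain z where "z \<in> V - {x,y}" "z \<notin> nbhd V \<theta> x" "z \<notin> nbhd V \<theta> y" by blast
  then show False by (rule Znonempty)
qed

end




locale light =
  fixes V :: "'a set" and \<theta> :: "'a \<Rightarrow> 'a \<Rightarrow> int" and v x y :: 'a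
  assumes T: "trigraph V \<theta>" and Bg: "berge V \<theta>"
    and NB: "\<not> (\<exists>A B. balanced_skew_partition V \<theta> A B)"
    and cV: "card V \<ge> 6" and vV: "v \<in> V" and xV: "x \<in> V" and yV: "y \<in> V"
    and vx: "v \<noteq> x" and vy: "v \<noteq> y" and xy: "x \<noteq> y"
    and tvx: "\<theta> v x = 0" and tvy: "\<theta> v y = 0" and txy: "\<theta> x y = -1"
    and vR: "\<forall>w\<in>V - {v,x,y}. \<theta> v w = -1"
    and nn: "nbhd V \<theta> x \<inter> nbhd V \<theta> y = {v}"
    and z0: "\<And>u w. u \<in> V \<Longrightarrow> w \<in> V \<Longrightarrow> u \<noteq> w \<Longrightarrow> \<theta> u w = 0 \<Longrightarrow> u \<in> {v,x,y} \<and> w \<in> {v,x,y}"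
    and Rcl: "\<And>u w. u \<in> V - {v,x,y} \<Longrightarrow> w \<in> V - {v,x,y} \<Longrightarrow> u \<noteq> w \<Longrightarrow> \<theta> u w \<noteq> -1"
begin

lemma fV: "finite V" using T unfolding trigraph_def by simp

lemma sym: "u \<in> V \<Longrightarrow> w \<in> V \<Longrightarrow> \<theta> u w = \<theta> w u"
  by (cases "u = w") (auto dest: tri_sym[OF T])

lemma e3: "{v,y,x} = {v,x,y}" by (simp only: insert_commute)

lemma swap: "light V \<theta> v y x"
proof
  show "\<theta> y x = -1" using txy sym[OF xV yV] by simp
  show "\<forall>w\<in>V - {v,y,x}. \<theta> v w = -1" using vR unfolding e3 .
  show "nbhd V \<theta> y \<inter> nbhd V \<theta> x = {v}" using nn by (simp only: Int_commute)
  show "\<And>u w. u \<in> V \<Longrightarrow> w \<in> V \<Longrightarrow> u \<noteq> w \<Longrightarrow> \<theta> u w = 0 \<Longrightarrow> u \<in> {v,y,x} \<and> w \<in> {v,y,x}"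
    unfolding e3 by (rule z0)
  show "\<And>u w. u \<in> V - {v,y,x} \<Longrightarrow> w \<in> V - {v,y,x} \<Longrightarrow> u \<noteq> w \<Longrightarrow> \<theta> u w \<noteq> -1"
    unfolding e3 by (rule Rcl)
  show "y \<noteq> x" using xy by simp
qed (fact T Bg NB cV vV xV yV vy vx tvy tvx)+

lemma Rc: "u \<in> V - {v,x,y} \<Longrightarrow> w \<in> V - {v,x,y} \<Longrightarrow> u \<noteq> w \<Longrightarrow> \<theta> u w = 1"
proof -
  assume a: "u \<in> V - {v,x,y}" "w \<in> V - {v,x,y}" "u \<noteq> w"
  have "\<theta> u w \<noteq> 0" using z0[of u w] a by auto
  then show "\<theta> u w = 1" using Rcl[OF a] tri_val[OF T, of u w] a by auto
qed

lemma vvr: "r \<in> V - {v,x,y} \<Longrightarrow> \<theta> v r = -1 \<and> \<theta> r v = -1"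
  using vR sym[of v r] vV by auto

lemma vxr: assumes "r \<in> V - {v,x,y}"
  shows "\<theta> x r = (if r \<in> nbhd V \<theta> x then 1 else -1)" "\<theta> r x = (if r \<in> nbhd V \<theta> x then 1 else -1)"
proof -
  have r: "r \<in> V" "r \<noteq> x" "r \<noteq> y" "r \<noteq> v" using assms by auto
  have "\<theta> r x \<noteq> 0" using z0[of r x] r xV by auto
  then have "\<theta> r x = -1 \<or> \<theta> r x = 1" using tri_val[OF T r(1) xV r(2)] by auto
  moreover have "r \<in> nbhd V \<theta> x \<longleftrightarrow> \<theta> r x \<in> {0,1}" using r unfolding nbhd_def adj_def by auto
  ultimately show "\<theta> r x = (if r \<in> nbhd V \<theta> x then 1 else -1)" by auto
  then show "\<theta> x r = (if r \<in> nbhd V \<theta> x then 1 else -1)" using sym[OF xV r(1)] by simp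
qed

lemma vyr: assumes "r \<in> V - {v,x,y}"
  shows "\<theta> y r = (if r \<in> nbhd V \<theta> y then 1 else -1)" "\<theta> r y = (if r \<in> nbhd V \<theta> y then 1 else -1)"
proof -
  have "r \<in> V - {v,y,x}" using assms unfolding e3 .
  then show "\<theta> y r = (if r \<in> nbhd V \<theta> y then 1 else -1)" "\<theta> r y = (if r \<in> nbhd V \<theta> y then 1 else -1)"
    using light.vxr[OF swap] by blast+
qed

lemma cardR: "card (V - {v,x,y}) \<ge> 3"
proof -
  have "card (V - {v,x,y}) = card V - card {v,x,y}" using vV xV yV fV by (intro card_Diff_subset) auto
  moreover have "card {v,x,y} = 3" using vx vy xy by simp
  ultimately show ?thesis using cV by simp
qed

lemma noX:
  assumes X0: "(V - {v,x,y}) \<inter> nbhd V \<theta> x = {}" and RY: "V - {v,x,y} \<subseteq> nbhd V \<theta> y"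
  shows False
proof -
  let ?R = "V - {v,x,y}"
  have fR: "finite ?R" using fV by simp
  have "card ?R \<ge> 2" using cardR by simp
  then obtain y1 w where yw: "y1 \<in> ?R" "w \<in> ?R" "y1 \<noteq> w" using two_elems'[OF fR] by blast
  define B where "B = {y} \<union> (?R - {y1})"
  have Bc: "\<theta> p q = 1" if pq: "p \<in> B" "q \<in> B" "p \<noteq> q" for p q
  proof -
    have "p = y \<or> p \<in> ?R" "q = y \<or> q \<in> ?R" using pq unfolding B_def by auto
    then show ?thesis
    proof (elim disjE)
      assume "p = y" "q = y" then show ?thesis using pq by simp
    next
      assume "p = y" "q \<in> ?R" then show ?thesis using vyr(1)[of q] RY by auto
    next
      assume "q = y" "p \<in> ?R" then show ?thesis using vyr(2)[of p] RY by auto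
    next
      assume "p \<in> ?R" "q \<in> ?R" then show ?thesis using Rc pq by blast
    qed
  qed
  have VB: "V - B = {v,x,y1}" unfolding B_def using yw vV xV vy xy by auto
  have nc: "\<not> connected_set \<theta> (V - B)" unfolding VB
  proof (rule not_connected_I[of v _ y1 "{v,x}"])
    fix a c assume "a \<in> {v,x,y1}" "c \<in> {v,x,y1}" "a \<in> {v,x}" "c \<notin> {v,x}"
    then have "c = y1" "a = v \<or> a = x" by auto
    moreover have "\<theta> v y1 = -1" using vvr[of y1] yw by simp
    moreover have "\<theta> x y1 = -1" using vxr(1)[of y1] yw X0 by auto
    ultimately show "\<not> adj \<theta> a c" unfolding adj_def by auto
  qed (use yw in auto)
  have "balanced_skew_partition V \<theta> (V - B) B"
    by (rule L1[OF T _ _ _ _ _ nc, of y w]) (use Bc yw yV vy xy in \<open>auto simp: B_def\<close>)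
  then show False using NB by blast
qed

lemma berge_hole5: "is_hole V \<theta> [a,b,c,d,e] \<Longrightarrow> False"
  using Bg unfolding berge_def by force

lemma light_false: False
proof -
  let ?R = "V - {v,x,y}"
  have fR: "finite ?R" using fV by simp
  show False
  proof (cases "\<exists>z\<in>?R. z \<notin> nbhd V \<theta> x \<and> z \<notin> nbhd V \<theta> y")
    case True
    then obtain z where z: "z \<in> ?R" "z \<notin> nbhd V \<theta> x" "z \<notin> nbhd V \<theta> y" by blast
    define B where "B = ?R - {z}"
    have "card B = card ?R - 1" unfolding B_def using z fR by simp
    then have "card B \<ge> 2" using cardR by simp
    moreover have "finite B" unfolding B_def using fV by simp
    ultimately have "\<exists>b1\<in>B. \<exists>b2\<in>B. b1 \<noteq> b2" by (intro two_elems')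
    then obtain b1 b2 where b: "b1 \<in> B" "b2 \<in> B" "b1 \<noteq> b2" by blast
    have VB: "V - B = {v,x,y,z}" unfolding B_def using z vV xV yV by auto
    have nc: "\<not> connected_set \<theta> (V - B)" unfolding VB
    proof (rule not_connected_I[of v _ z "{v,x,y}"])
      fix a c assume "a \<in> {v,x,y,z}" "c \<in> {v,x,y,z}" "a \<in> {v,x,y}" "c \<notin> {v,x,y}"
      then have "c = z" "a = v \<or> a = x \<or> a = y" by auto
      moreover have "\<theta> v z = -1" using vvr[of z] z by simp
      moreover have "\<theta> x z = -1" using vxr(1)[of z] z by simp
      moreover have "\<theta> y z = -1" using vyr(1)[of z] z by simp
      ultimately show "\<not> adj \<theta> a c" unfolding adj_def by auto
    qed (use z in auto)
    have "balanced_skew_partition V \<theta> (V - B) B"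
      by (rule L1[OF T _ _ b nc]) (auto simp: B_def intro: Rc)
    then show False using NB by blast
  next
    case False
    then have RZ: "?R \<subseteq> nbhd V \<theta> x \<union> nbhd V \<theta> y" by blast
    show False
    proof (cases "?R \<inter> nbhd V \<theta> x = {}")
      case True
      have "?R \<subseteq> nbhd V \<theta> y" using True RZ by blast
      then show False by (rule noX[OF True])
    next
      case nX: False
      show False
      proof (cases "?R \<inter> nbhd V \<theta> y = {}")
        case True
        have a1: "(V - {v,y,x}) \<inter> nbhd V \<theta> y = {}" using True unfolding e3 .
        have a2: "V - {v,y,x} \<subseteq> nbhd V \<theta> x" using True RZ unfolding e3 by blast
        show False by (rule light.noX[OF swap a1 a2])
      next
        case nY: False
        obtain a where a: "a \<in> ?R" "a \<in> nbhd V \<theta> x" using nX by blast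
        obtain b where b: "b \<in> ?R" "b \<in> nbhd V \<theta> y" using nY by blast
        have na: "a \<notin> nbhd V \<theta> y" using nn a by auto
        have nb: "b \<notin> nbhd V \<theta> x" using nn b by auto
        have d: "distinct [y,v,x,a,b]" using a b na nb vx vy xy by auto
        have s: "set [y,v,x,a,b] \<subseteq> V" using a b vV xV yV by auto
        have "\<theta> y v = 0" using tvy sym[OF vV yV] by simp
        moreover have "\<theta> x a = 1" using vxr(1)[of a] a by simp
        moreover have "\<theta> a b = 1" using Rc[of a b] a b d by auto
        moreover have "\<theta> b y = 1" using vyr(2)[of b] b by simp
        moreover have "\<theta> y x = -1" using txy sym[OF xV yV] by simp
        moreover have "\<theta> y a = -1" using vyr(1)[of a] a na by simp
        moreover have "\<theta> v a = -1" "\<theta> v b = -1" using vvr a b by auto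
        moreover have "\<theta> x b = -1" using vxr(1)[of b] b nb by simp
        ultimately have "is_hole V \<theta> [y,v,x,a,b]"
          using hole5[OF T d s] tvx unfolding adj_def antiadj_def by simp
        then show False by (rule berge_hole5)
      qed
    qed
  qed
qed

end




lemma zeroD:
  assumes T: "trigraph V \<theta>" and uw: "u \<in> V" "w \<in> V" "u \<noteq> w" "\<theta> u w = 0"
  shows "u \<in> Dset V \<theta> \<and> w \<in> Dset V \<theta>"
proof -
  let ?C = "sigma_comp V \<theta> u"
  have uC: "u \<in> ?C" using uw unfolding sigma_comp_def by simp
  have "sw_edge V \<theta> u w" using uw unfolding sw_edge_def by simp
  then have wC: "w \<in> ?C" using uw unfolding sigma_comp_def by auto
  have fC: "finite ?C" using T unfolding trigraph_def sigma_comp_def by simp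
  have "{u,w} \<subseteq> ?C" using uC wC by simp
  then have "card {u,w} \<le> card ?C" using fC by (rule card_mono[rotated])
  then have "card ?C \<ge> 2" using uw by simp
  then have "switchable_component V \<theta> ?C" unfolding switchable_component_def using uw by blast
  then show ?thesis using uC wC unfolding Dset_def by blast
qed

lemma D_eq:
  assumes F: "class_F V \<theta>" and sc: "switchable_component V \<theta> C"
  shows "Dset V \<theta> = C"
proof -
  have "\<forall>C'. switchable_component V \<theta> C' \<longrightarrow> C' = C" using F sc unfolding class_F_def by blast
  then have "{C'. switchable_component V \<theta> C'} = {C}" using sc by blast
  then show ?thesis unfolding Dset_def by simp
qed

lemma edge_zero:
  assumes T: "trigraph V \<theta>" and e: "{a,b} \<in> sw_edges_in V \<theta> C" and ab: "a \<noteq> b"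
  shows "\<theta> a b = 0"
proof -
  obtain u w where uw: "{a,b} = {u,w}" "sw_edge V \<theta> u w" using e unfolding sw_edges_in_def by blast
  then have s: "u \<in> V" "w \<in> V" "u \<noteq> w" "\<theta> u w = 0" unfolding sw_edge_def by auto
  have "(a = u \<and> b = w) \<or> (a = w \<and> b = u)" using uw(1) ab by (auto simp: doubleton_eq_iff)
  then show ?thesis
  proof
    assume "a = u \<and> b = w" then show ?thesis using s by simp
  next
    assume "a = w \<and> b = u" then show ?thesis using s tri_sym[OF T s(1) s(2) s(3)] by simp
  qed
qed

lemma comb:
  assumes "a \<noteq> b" "c \<noteq> d" "{a,b} \<noteq> {c,d}" "{a,b} \<inter> {c,d} \<noteq> {}"
  shows "\<exists>v x y. v \<noteq> x \<and> v \<noteq> y \<and> x \<noteq> y \<and> {a,b} = {v,x} \<and> {c,d} = {v,y}"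
proof -
  have "a = c \<or> a = d \<or> b = c \<or> b = d" using assms(4) by auto
  then show ?thesis
  proof (elim disjE)
    assume "a = c" then show ?thesis using assms by (intro exI[of _ a] exI[of _ b] exI[of _ d]) auto
  next
    assume "a = d" then show ?thesis using assms by (intro exI[of _ a] exI[of _ b] exI[of _ c]) auto
  next
    assume "b = c" then show ?thesis using assms by (intro exI[of _ b] exI[of _ a] exI[of _ d]) auto
  next
    assume "b = d" then show ?thesis using assms by (intro exI[of _ b] exI[of _ a] exI[of _ c]) auto
  qed
qed

lemma struct:
  assumes T: "trigraph V \<theta>" and sc: "switchable_component V \<theta> C"
    and cE: "card (sw_edges_in V \<theta> C) \<le> 2"
  shows "(\<exists>x y. x \<noteq> y \<and> C = {x,y} \<and> sw_edges_in V \<theta> C = {{x,y}}) \<or>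
         (\<exists>v x y. v \<noteq> x \<and> v \<noteq> y \<and> x \<noteq> y \<and> C = {v,x,y} \<and> sw_edges_in V \<theta> C = {{v,x},{v,y}})"
proof -
  obtain x0 where x0: "x0 \<in> V" "C = sigma_comp V \<theta> x0" and cC: "card C \<ge> 2"
    using sc unfolding switchable_component_def by blast
  let ?S = "sw_edge V \<theta>"
  let ?E = "sw_edges_in V \<theta> C"
  have CV: "C \<subseteq> V" using x0 unfolding sigma_comp_def by auto
  have fC: "finite C" using CV T unfolding trigraph_def by (auto intro: finite_subset)
  have x0C: "x0 \<in> C" using x0 unfolding sigma_comp_def by simp
  have step: "b \<in> C" if "a \<in> C" "?S a b" for a b
  proof -
    have "?S\<^sup>*\<^sup>* x0 a" using that x0 unfolding sigma_comp_def by simp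
    then have "?S\<^sup>*\<^sup>* x0 b" using that(2) by (rule rtranclp.rtrancl_into_rtrancl)
    moreover have "b \<in> V" using that(2) unfolding sw_edge_def by simp
    ultimately show ?thesis using x0 unfolding sigma_comp_def by simp
  qed
  have Ein: "{a,b} \<in> ?E" if "a \<in> C" "?S a b" for a b
    using that step[OF that] unfolding sw_edges_in_def by blast
  have Esub: "\<exists>u w. e = {u,w} \<and> u \<in> C \<and> w \<in> C \<and> u \<noteq> w" if "e \<in> ?E" for e
    using that unfolding sw_edges_in_def sw_edge_def by blast
  have reach: "?S\<^sup>*\<^sup>* x0 w" if "w \<in> C" for w using that x0 unfolding sigma_comp_def by simp
  have cover: "\<exists>e\<in>?E. w \<in> e" if w: "w \<in> C" for w
  proof (cases "w = x0")
    case False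
    from reach[OF w] show ?thesis
    proof (cases rule: rtranclp.cases)
      case rtrancl_refl then show ?thesis using False by simp
    next
      case (rtrancl_into_rtrancl u)
      have "u \<in> V" using rtrancl_into_rtrancl(2) unfolding sw_edge_def by simp
      then have "u \<in> C" using rtrancl_into_rtrancl(1) x0 unfolding sigma_comp_def by simp
      then have "{u,w} \<in> ?E" using Ein rtrancl_into_rtrancl(2) by blast
      then show ?thesis by blast
    qed
  next
    case True
    have "\<exists>a\<in>C. \<exists>b\<in>C. a \<noteq> b" using two_elems'[OF fC cC] .
    then obtain w' where w': "w' \<in> C" "w' \<noteq> x0" by blast
    from reach[OF w'(1)] show ?thesis
    proof (cases rule: converse_rtranclpE)
      case base then show ?thesis using w' by simp
    next
      case (step u1)
      have "{x0,u1} \<in> ?E" using Ein[OF x0C step(1)] .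
      then show ?thesis using True by blast
    qed
  qed
  have EsubC: "e \<subseteq> C" if eE: "e \<in> ?E" for e
  proof -
    obtain u w where "e = {u,w}" "u \<in> C" "w \<in> C" using Esub[OF eE] by blast
    then show ?thesis by simp
  qed
  have EP: "?E \<subseteq> Pow C" using EsubC by blast
  have fE: "finite ?E" using finite_subset[OF EP] fC by simp
  have UE: "\<Union>?E = C"
  proof
    show "\<Union>?E \<subseteq> C" using EsubC by blast
    show "C \<subseteq> \<Union>?E" using cover by blast
  qed
  have neE: "?E \<noteq> {}" using cover[OF x0C] by blast
  then have "card ?E \<noteq> 0" using fE by simp
  then have "card ?E = 1 \<or> card ?E = 2" using cE by linarith
  then show ?thesis
  proof
    assume "card ?E = 1"
    then obtain e where e: "?E = {e}" by (rule card_1_singletonE)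
    have "e \<in> ?E" using e by simp
    then obtain u w where uw: "e = {u,w}" "u \<noteq> w" using Esub by blast
    have "C = {u,w}" using UE e uw by simp
    then show ?thesis using e uw by (intro disjI1 exI[of _ u] exI[of _ w]) simp
  next
    assume "card ?E = 2"
    then obtain e1 e2 where e12: "?E = {e1,e2}" "e1 \<noteq> e2" unfolding card_2_iff by blast
    have "e1 \<in> ?E" "e2 \<in> ?E" using e12 by auto
    obtain a b where ab: "e1 = {a,b}" "a \<noteq> b" using Esub[OF \<open>e1 \<in> ?E\<close>] by blast
    obtain c d where cd: "e2 = {c,d}" "c \<noteq> d" using Esub[OF \<open>e2 \<in> ?E\<close>] by blast
    have key: False if fg: "?E = {f,g}" "f \<inter> g = {}" "x0 \<in> f" "g \<noteq> {}" for f g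
    proof -
      have "f \<in> ?E" "g \<in> ?E" using fg(1) by auto
      then have fC': "f \<subseteq> C" "g \<subseteq> C" using EsubC by auto
      have "w \<in> f" if "?S\<^sup>*\<^sup>* x0 w" for w
        using that
      proof (induction rule: rtranclp_induct)
        case base then show ?case using fg by simp
      next
        case (step w w')
        have "w \<in> C" using step.IH fC' by blast
        have "{w,w'} \<in> ?E" using Ein[OF \<open>w \<in> C\<close> step.hyps(2)] .
        then have "{w,w'} = f \<or> {w,w'} = g" using fg(1) by simp
        then show ?case
        proof
          assume "{w,w'} = f" then show ?case by blast
        next
          assume "{w,w'} = g" then have "w \<in> g" by blast
          then show ?case using step.IH fg(2) by blast
        qed
      qed
      then have "C \<subseteq> f" using reach by blast
      then show False using fC' fg by blast
    qed
    show ?thesis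
    proof (cases "e1 \<inter> e2 = {}")
      case True
      have "x0 \<in> e1 \<or> x0 \<in> e2" using UE e12 x0C by blast
      then have False
      proof
        assume "x0 \<in> e1" moreover have "e2 \<noteq> {}" using cd by simp
        ultimately show False using key[of e1 e2] e12 True by simp
      next
        assume "x0 \<in> e2" moreover have "e1 \<noteq> {}" using ab by simp
        moreover have "?E = {e2,e1}" "e2 \<inter> e1 = {}" using e12 True by auto
        ultimately show False using key[of e2 e1] by simp
      qed
      then show ?thesis ..
    next
      case False
      have "{a,b} \<noteq> {c,d}" "{a,b} \<inter> {c,d} \<noteq> {}" using e12(2) ab(1) cd(1) False by simp_all
      then have "\<exists>v x y. v \<noteq> x \<and> v \<noteq> y \<and> x \<noteq> y \<and> {a,b} = {v,x} \<and> {c,d} = {v,y}"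
        by (rule comb[OF ab(2) cd(2)])
      then obtain v x y where vxy: "v \<noteq> x" "v \<noteq> y" "x \<noteq> y" "{a,b} = {v,x}" "{c,d} = {v,y}"
        by blast
      have "?E = {{v,x},{v,y}}" using e12 ab cd vxy by simp
      moreover have "C = {v,x,y}" using UE e12 ab cd vxy by auto
      ultimately show ?thesis using vxy by (intro disjI2 exI[of _ v] exI[of _ x] exI[of _ y]) simp
    qed
  qed
qed




theorem theorem3p3:
  fixes V :: "'a set" and \<theta> :: "'a \<Rightarrow> 'a \<Rightarrow> int"
  assumes "class_F V \<theta>"
    and "\<not> (\<exists>A B. balanced_skew_partition V \<theta> A B)"
    and "\<not> (\<exists>hs. is_antihole V \<theta> hs \<and> length hs = 6)"
    and "\<not> favorable V \<theta>"
  shows "complete_trigraph V \<theta> \<or> card V \<le> 5"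
proof (rule ccontr)
  note F = assms(1) and NB = assms(2) and NA6 = assms(3) and UF = assms(4)
  assume H: "\<not> (complete_trigraph V \<theta> \<or> card V \<le> 5)"
  then have ncl: "\<not> is_clique \<theta> V" and cV: "card V \<ge> 6"
    unfolding complete_trigraph_def by auto
  have T: "trigraph V \<theta>" and Bg: "berge V \<theta>" using F unfolding class_F_def by auto
  have cond0: "\<forall>C. switchable_component V \<theta> C \<longrightarrow>
        card (sw_edges_in V \<theta> C) \<le> 2 \<and>
        (\<forall>x y. sw_edges_in V \<theta> C = {{x, y}} \<longrightarrow> nbhd V \<theta> x \<inter> nbhd V \<theta> y = {}) \<and>
        (\<forall>v x y. x \<noteq> y \<and> sw_edges_in V \<theta> C = {{v, x}, {v, y}} \<longrightarrow>
            (\<forall>w\<in>V - {v, x, y}. \<theta> v w = -1) \<and> \<theta> x y = -1 \<and>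
            nbhd V \<theta> x \<inter> nbhd V \<theta> y = {v})"
    using F unfolding class_F_def by (elim conjE)
  note cond = cond0[rule_format]
  define D where "D = Dset V \<theta>"
  have zD: "u \<in> D \<and> w \<in> D" if "u \<in> V" "w \<in> V" "u \<noteq> w" "\<theta> u w = 0" for u w
    using zeroD[OF T that] unfolding D_def .
  have cases: "\<not> (\<exists>u\<in>V - D. \<exists>w\<in>V - D. u \<noteq> w \<and> \<theta> u w = -1) \<or>
      (\<exists>x y. x \<noteq> y \<and> D = {x,y} \<and> is_clique \<theta> (V - (D \<union> nbhd V \<theta> x)) \<and>
             is_clique \<theta> (V - (D \<union> nbhd V \<theta> y)))"
  proof -
    have c5: "card V \<ge> 5" using cV by simp
    have "\<not> (\<exists>u\<in>V - D. \<exists>w\<in>V - D. u \<noteq> w \<and> \<theta> u w = -1) \<or>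
       \<not> (\<forall>x y. x \<noteq> y \<and> D = {x, y} \<longrightarrow>
        \<not> is_clique \<theta> (V - (D \<union> nbhd V \<theta> x)) \<or>
        \<not> is_clique \<theta> (V - (D \<union> nbhd V \<theta> y)))"
      using UF c5 unfolding favorable_def D_def by blast
    then show ?thesis by blast
  qed
  show False
  proof (cases "D = {}")
    case True
    have "is_clique \<theta> V"
      unfolding is_clique_def
    proof (intro ballI impI)
      fix u w assume uw: "u \<in> V" "w \<in> V" "u \<noteq> w"
      have "\<theta> u w \<noteq> 0" using zD[OF uw] True by auto
      moreover have "\<theta> u w \<noteq> -1"
      proof -
        have "\<not> (\<exists>u\<in>V - D. \<exists>w\<in>V - D. u \<noteq> w \<and> \<theta> u w = -1)" using cases True by blast
        then show ?thesis using uw True by blast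
      qed
      ultimately show "adj \<theta> u w" using tri_val[OF T uw] unfolding adj_def by auto
    qed
    then show False using ncl by simp
  next
    case False
    then obtain C where sc: "switchable_component V \<theta> C" unfolding D_def Dset_def by blast
    have DC: "D = C" unfolding D_def by (rule D_eq[OF F sc])
    have CV: "C \<subseteq> V" using sc unfolding switchable_component_def sigma_comp_def by auto
    note cc = cond[OF sc]
    have cE: "card (sw_edges_in V \<theta> C) \<le> 2" using cc by (rule conjunct1)
    have cS: "\<forall>x y. sw_edges_in V \<theta> C = {{x, y}} \<longrightarrow> nbhd V \<theta> x \<inter> nbhd V \<theta> y = {}"
      using cc by (elim conjE)
    have cL: "\<forall>v x y. x \<noteq> y \<and> sw_edges_in V \<theta> C = {{v, x}, {v, y}} \<longrightarrow>
            (\<forall>w\<in>V - {v, x, y}. \<theta> v w = -1) \<and> \<theta> x y = -1 \<and>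
            nbhd V \<theta> x \<inter> nbhd V \<theta> y = {v}"
      using cc by (elim conjE)
    have "(\<exists>x y. x \<noteq> y \<and> C = {x,y} \<and> sw_edges_in V \<theta> C = {{x,y}}) \<or>
         (\<exists>v x y. v \<noteq> x \<and> v \<noteq> y \<and> x \<noteq> y \<and> C = {v,x,y} \<and> sw_edges_in V \<theta> C = {{v,x},{v,y}})"
      by (rule struct[OF T sc cE])
    then show False
    proof
      assume "\<exists>x y. x \<noteq> y \<and> C = {x,y} \<and> sw_edges_in V \<theta> C = {{x,y}}"
      then obtain x y where xy: "x \<noteq> y" "C = {x,y}" "sw_edges_in V \<theta> C = {{x,y}}" by blast
      have xV: "x \<in> V" and yV: "y \<in> V" using CV xy by auto
      have t0: "\<theta> x y = 0" using edge_zero[OF T _ xy(1), of C] xy(3) by simp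
      have nn: "nbhd V \<theta> x \<inter> nbhd V \<theta> y = {}" using cS xy(3) by simp
      have z0: "{u,w} = {x,y}" if "u \<in> V" "w \<in> V" "u \<noteq> w" "\<theta> u w = 0" for u w
      proof -
        have "u \<in> {x,y}" "w \<in> {x,y}" using zD[OF that] DC xy by auto
        then show ?thesis using that(3) by auto
      qed
      have cl: "is_clique \<theta> (V - ({x,y} \<union> nbhd V \<theta> x)) \<and> is_clique \<theta> (V - ({x,y} \<union> nbhd V \<theta> y))"
        using cases
      proof
        assume ns: "\<not> (\<exists>u\<in>V - D. \<exists>w\<in>V - D. u \<noteq> w \<and> \<theta> u w = -1)"
        have "adj \<theta> u w" if "u \<in> V - {x,y}" "w \<in> V - {x,y}" "u \<noteq> w" for u w
        proof -
          have "\<theta> u w \<noteq> -1" using ns that DC xy by auto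
          moreover have "\<theta> u w \<noteq> 0" using z0[of u w] that by (auto simp: doubleton_eq_iff)
          ultimately show ?thesis using tri_val[OF T, of u w] that unfolding adj_def by auto
        qed
        then show ?thesis unfolding is_clique_def by blast
      next
        assume "\<exists>x y. x \<noteq> y \<and> D = {x,y} \<and> is_clique \<theta> (V - (D \<union> nbhd V \<theta> x)) \<and>
             is_clique \<theta> (V - (D \<union> nbhd V \<theta> y))"
        then obtain x' y' where c: "D = {x',y'}" "is_clique \<theta> (V - (D \<union> nbhd V \<theta> x'))"
             "is_clique \<theta> (V - (D \<union> nbhd V \<theta> y'))" by blast
        have DD: "D = {x,y}" using DC xy by simp
        have "(x' = x \<and> y' = y) \<or> (x' = y \<and> y' = x)" using c(1) DD by (auto simp: doubleton_eq_iff)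
        then show ?thesis using c unfolding DD by auto
      qed
      have cl1: "is_clique \<theta> (V - ({x,y} \<union> nbhd V \<theta> x))" and cl2: "is_clique \<theta> (V - ({x,y} \<union> nbhd V \<theta> y))"
        using cl by auto
      have "small V \<theta> x y"
        by unfold_locales (fact T Bg NB NA6 cV xV yV xy(1) t0 z0 nn cl1 cl2)+
      then show False by (rule small.small_false)
    next
      assume "\<exists>v x y. v \<noteq> x \<and> v \<noteq> y \<and> x \<noteq> y \<and> C = {v,x,y} \<and> sw_edges_in V \<theta> C = {{v,x},{v,y}}"
      then obtain v x y where vxy: "v \<noteq> x" "v \<noteq> y" "x \<noteq> y" "C = {v,x,y}"
        "sw_edges_in V \<theta> C = {{v,x},{v,y}}" by blast
      have vV: "v \<in> V" and xV: "x \<in> V" and yV: "y \<in> V" using CV vxy by auto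
      have tvx: "\<theta> v x = 0" using edge_zero[OF T _ vxy(1), of C] vxy(5) by simp
      have tvy: "\<theta> v y = 0" using edge_zero[OF T _ vxy(2), of C] vxy(5) by simp
      have L: "(\<forall>w\<in>V - {v, x, y}. \<theta> v w = -1) \<and> \<theta> x y = -1 \<and> nbhd V \<theta> x \<inter> nbhd V \<theta> y = {v}"
        using cL vxy(3,5) by simp
      have DD: "D = {v,x,y}" using DC vxy by simp
      have z0: "u \<in> {v,x,y} \<and> w \<in> {v,x,y}" if "u \<in> V" "w \<in> V" "u \<noteq> w" "\<theta> u w = 0" for u w
        using zD[OF that] DD by simp
      have c3: "card D = 3" using DD vxy by simp
      have ns: "\<not> (\<exists>u\<in>V - D. \<exists>w\<in>V - D. u \<noteq> w \<and> \<theta> u w = -1)"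
      proof -
        have "\<not> (\<exists>x y. x \<noteq> y \<and> D = {x,y})"
        proof
          assume "\<exists>x y. x \<noteq> y \<and> D = {x,y}"
          then obtain a b where "a \<noteq> b" "D = {a,b}" by blast
          then have "card D = 2" by simp
          then show False using c3 by simp
        qed
        then show ?thesis using cases by blast
      qed
      have Rcl: "\<theta> u w \<noteq> -1" if "u \<in> V - {v,x,y}" "w \<in> V - {v,x,y}" "u \<noteq> w" for u w
        using ns that DD by auto
      have L1: "\<forall>w\<in>V - {v, x, y}. \<theta> v w = -1" and L2: "\<theta> x y = -1" and L3: "nbhd V \<theta> x \<inter> nbhd V \<theta> y = {v}"
        using L by auto
      have "light V \<theta> v x y"
        by unfold_locales (fact T Bg NB cV vV xV yV vxy(1) vxy(2) vxy(3) tvx tvy L1 L2 L3 z0 Rcl)+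
      then show False by (rule light.light_false)
    qed
  qed
qed


end
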